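(* Let $H$ be a compact subgroup of a locally compact group $G$, and let $l$ be a length function on $G$ which is bounded on $H$. Then there exists a length function $l'$ on $G$ such that: (i) $l$ and $l'$ are equivalent; (ii) the kernel $\{g\in G: l'(g)=0\}$ of $l'$ contains $H$, i.e. $l'$ is a length function on the pair $(G,H)$; (iii) if $l$ is locally bounded (resp. proper), then $l'$ is locally bounded (resp. proper), both as a length function on $G$ and as a length function on the pair $(G,H)$.
   Context: A length function on a locally compact group $G$ is a Borel function $l:G\to[0,\infty)$ with $l(e)=0$, $l(g)=l(g^{-1})$ and $l(gh)\le l(g)+l(h)$ for all $g,h$. A length function on the pair $(G,H)$ is a length function on $G$ vanishing on $H$ (it is then bi-$H$-invariant and induces a function on $H\backslash G$). A length function is locally bounded if it is bounded on every compact subset of $G$ (resp. the induced function on $H\backslash G$ is bounded on every compact subset of $H\backslash G$), and proper if $l^{-1}([0,n])$ is relatively compact in $G$ (resp. its image is relatively compact in $H\backslash G$) for every $n$. Two length functions $l_1,l_2$ are equivalent if there are constants $c_0,c_1\ge0$ with $l_2\le c_1l_1+c_0$ and $l_1\le c_1l_2+c_0$ on $G$. *)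

theory Defs
  imports "HOL-Analysis.Analysis"
begin

text \<open>A (not necessarily abelian) topological group is modelled by a type of class
  topological_group_add (group written additively: + is the product, 0 the identity,
  uminus the inverse).  Local compactness and Hausdorffness are separate assumptions.\<close>

definition length_function :: "('a::{topological_space,group_add} \<Rightarrow> real) \<Rightarrow> bool" where
  "length_function l \<longleftrightarrow>
     l \<in> borel_measurable borel \<and> (\<forall>g. 0 \<le> l g) \<and> l 0 = 0 \<and>
     (\<forall>g. l g = l (- g)) \<and> (\<forall>g h. l (g + h) \<le> l g + l h)"

definition is_subgroup :: "'a::group_add set \<Rightarrow> bool" where
  "is_subgroup H \<longleftrightarrow> 0 \<in> H \<and> (\<forall>x\<in>H. \<forall>y\<in>H. x + y \<in> H) \<and> (\<forall>x\<in>H. - x \<in> H)"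

definition pair_length_function :: "'a set \<Rightarrow> ('a::{topological_space,group_add} \<Rightarrow> real) \<Rightarrow> bool" where
  "pair_length_function H l \<longleftrightarrow> length_function l \<and> (\<forall>h\<in>H. l h = 0)"

definition lf_equivalent :: "('a \<Rightarrow> real) \<Rightarrow> ('a \<Rightarrow> real) \<Rightarrow> bool" where
  "lf_equivalent l1 l2 \<longleftrightarrow> (\<exists>c0 c1. 0 \<le> c0 \<and> 0 \<le> c1 \<and>
      (\<forall>g. l2 g \<le> c1 * l1 g + c0 \<and> l1 g \<le> c1 * l2 g + c0))"

definition locally_bounded_lf :: "('a::topological_space \<Rightarrow> real) \<Rightarrow> bool" where
  "locally_bounded_lf l \<longleftrightarrow> (\<forall>K. compact K \<longrightarrow> (\<exists>B. \<forall>g\<in>K. l g \<le> B))"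

definition proper_lf :: "('a::topological_space \<Rightarrow> real) \<Rightarrow> bool" where
  "proper_lf l \<longleftrightarrow> (\<forall>n::real. compact (closure (l -` {..n})))"

definition rcoset :: "'a::group_add set \<Rightarrow> 'a \<Rightarrow> 'a set" where
  "rcoset H g = {h + g | h. h \<in> H}"

definition coset_space :: "'a::group_add set \<Rightarrow> 'a set set" where
  "coset_space H = range (rcoset H)"

definition coset_topology :: "'a::{topological_space,group_add} set \<Rightarrow> 'a set topology" where
  "coset_topology H = topology (\<lambda>U. U \<subseteq> coset_space H \<and> open (\<Union>U))"

definition locally_bounded_pair :: "'a set \<Rightarrow> ('a::{topological_space,group_add} \<Rightarrow> real) \<Rightarrow> bool" where
  "locally_bounded_pair H l \<longleftrightarrow>
     (\<forall>C. compactin (coset_topology H) C \<longrightarrow> (\<exists>B. \<forall>c\<in>C. \<forall>g\<in>c. l g \<le> B))"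

definition proper_pair :: "'a set \<Rightarrow> ('a::{topological_space,group_add} \<Rightarrow> real) \<Rightarrow> bool" where
  "proper_pair H l \<longleftrightarrow>
     (\<forall>n::real. compactin (coset_topology H)
        ((coset_topology H) closure_of (rcoset H ` (l -` {..n}))))"

end

theory Submission
  imports Defs
begin

lemma tg_cont_left: "continuous_on S (\<lambda>x::'a::topological_group_add. a + x)"
  by (intro continuous_intros)
lemma tg_cont_right: "continuous_on S (\<lambda>x::'a::topological_group_add. x + a)"
  by (intro continuous_intros)

lemma img_left: "(+) (a::'a::group_add) ` S = (\<lambda>x. -a + x) -` S"
proof (rule set_eqI)
  fix x
  show "x \<in> (+) a ` S \<longleftrightarrow> x \<in> (\<lambda>x. -a + x) -` S"
  proof
    assume "x \<in> (+) a ` S"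
    then obtain s where "s \<in> S" "x = a + s" by blast
    then show "x \<in> (\<lambda>x. -a + x) -` S" by (simp add: add.assoc[symmetric])
  next
    assume "x \<in> (\<lambda>x. -a + x) -` S"
    then have "a + (-a + x) \<in> (+) a ` S" by blast
    then show "x \<in> (+) a ` S" by (simp add: add.assoc[symmetric])
  qed
qed

lemma img_right: "(\<lambda>x. x + (a::'a::group_add)) ` S = (\<lambda>x. x + -a) -` S"
proof (rule set_eqI)
  fix x
  show "x \<in> (\<lambda>x. x + a) ` S \<longleftrightarrow> x \<in> (\<lambda>x. x + -a) -` S"
  proof
    assume "x \<in> (\<lambda>x. x + a) ` S"
    then obtain s where "s \<in> S" "x = s + a" by blast
    then show "x \<in> (\<lambda>x. x + -a) -` S" by (simp add: add.assoc)
  next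
    assume "x \<in> (\<lambda>x. x + -a) -` S"
    then have "(x + -a) + a \<in> (\<lambda>x. x + a) ` S" by blast
    then show "x \<in> (\<lambda>x. x + a) ` S" by (simp add: add.assoc)
  qed
qed

lemma img_neg: "uminus ` (S::'a::group_add set) = uminus -` S"
proof (rule set_eqI)
  fix x :: 'a
  show "x \<in> uminus ` S \<longleftrightarrow> x \<in> uminus -` S"
  proof
    assume "x \<in> uminus ` S" then show "x \<in> uminus -` S" by auto
  next
    assume "x \<in> uminus -` S"
    then have "- (- x) \<in> uminus ` S" by blast
    then show "x \<in> uminus ` S" by simp
  qed
qed

lemma open_vimage_cont: "continuous_on UNIV f \<Longrightarrow> open S \<Longrightarrow> open (f -` S)"
  using continuous_on_open_vimage[of UNIV f] by simp

lemma closed_vimage_cont: "continuous_on UNIV f \<Longrightarrow> closed S \<Longrightarrow> closed (f -` S)"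
  using continuous_on_closed_vimage[of UNIV f] by simp

lemma tg_open_left: "open S \<Longrightarrow> open ((+) (a::'a::topological_group_add) ` S)"
  unfolding img_left by (rule open_vimage_cont[OF tg_cont_left])

lemma tg_open_right: "open S \<Longrightarrow> open ((\<lambda>x. x + (a::'a::topological_group_add)) ` S)"
  unfolding img_right by (rule open_vimage_cont[OF tg_cont_right])

lemma tg_open_neg: "open S \<Longrightarrow> open (uminus ` (S::'a::topological_group_add set))"
  unfolding img_neg by (rule open_vimage_cont) (intro continuous_intros)

lemma tg_closed_left: "closed S \<Longrightarrow> closed ((+) (a::'a::topological_group_add) ` S)"
  unfolding img_left by (rule closed_vimage_cont[OF tg_cont_left])

definition nwd :: "'a::topological_space set \<Rightarrow> bool" where
  "nwd F \<longleftrightarrow> closed F \<and> (\<forall>V. open V \<longrightarrow> V \<subseteq> F \<longrightarrow> V = {})"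

definition meager :: "'a::topological_space set \<Rightarrow> bool" where
  "meager M \<longleftrightarrow> (\<exists>\<F>. countable \<F> \<and> (\<forall>F\<in>\<F>. nwd F) \<and> M \<subseteq> \<Union>\<F>)"

lemma meager_subset: "meager M \<Longrightarrow> N \<subseteq> M \<Longrightarrow> meager N"
  unfolding meager_def by (meson subset_trans)

lemma meager_nwd: "nwd F \<Longrightarrow> meager F"
  unfolding meager_def by (intro exI[of _ "{F}"]) simp

lemma meager_Union:
  assumes "countable \<M>" "\<And>M. M \<in> \<M> \<Longrightarrow> meager M"
  shows "meager (\<Union>\<M>)"
proof -
  have "\<forall>M\<in>\<M>. \<exists>\<F>. countable \<F> \<and> (\<forall>F\<in>\<F>. nwd F) \<and> M \<subseteq> \<Union>\<F>"
    using assms(2) unfolding meager_def by blast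
  then have "\<exists>f. \<forall>M\<in>\<M>. countable (f M) \<and> (\<forall>F\<in>f M. nwd F) \<and> M \<subseteq> \<Union>(f M)"
    by (rule bchoice)
  then obtain f where f: "\<forall>M\<in>\<M>. countable (f M) \<and> (\<forall>F\<in>f M. nwd F) \<and> M \<subseteq> \<Union>(f M)"
    by blast
  have f1: "\<And>M. M \<in> \<M> \<Longrightarrow> countable (f M)" using f by simp
  have f2: "\<And>M F. M \<in> \<M> \<Longrightarrow> F \<in> f M \<Longrightarrow> nwd F" using f by simp
  have f3: "\<And>M. M \<in> \<M> \<Longrightarrow> M \<subseteq> \<Union>(f M)" using f by simp
  show ?thesis unfolding meager_def
  proof (intro exI conjI)
    show "countable (\<Union>(f ` \<M>))" using f1 assms(1) by (intro countable_UN) auto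
    show "\<forall>F\<in>\<Union>(f ` \<M>). nwd F" using f2 by auto
    show "\<Union>\<M> \<subseteq> \<Union>(\<Union>(f ` \<M>))"
    proof
      fix x assume "x \<in> \<Union>\<M>"
      then obtain M where M: "M \<in> \<M>" "x \<in> M" by (rule UnionE)
      then have "x \<in> \<Union>(f M)" using f3 by (meson subsetD)
      then obtain F where "F \<in> f M" "x \<in> F" by (rule UnionE)
      then show "x \<in> \<Union>(\<Union>(f ` \<M>))" using M(1) by (meson UN_I UnionI)
    qed
  qed
qed

lemma meager_Un: "meager A \<Longrightarrow> meager B \<Longrightarrow> meager (A \<union> B)"
proof -
  assume "meager A" "meager B"
  then have "meager (\<Union>{A,B})" by (intro meager_Union) auto
  then show ?thesis by simp
qed

lemma nwd_left: "nwd F \<Longrightarrow> nwd ((+) (a::'a::topological_group_add) ` F)"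
  unfolding nwd_def
proof (intro conjI allI impI)
  assume F: "closed F \<and> (\<forall>V. open V \<longrightarrow> V \<subseteq> F \<longrightarrow> V = {})"
  then show "closed ((+) a ` F)" using tg_closed_left by blast
  fix V assume V: "open V" "V \<subseteq> (+) a ` F"
  have "open ((+) (-a) ` V)" using V(1) by (rule tg_open_left)
  moreover have "(+) (-a) ` V \<subseteq> F"
  proof
    fix y assume "y \<in> (+) (-a) ` V"
    then obtain v where "v \<in> V" "y = -a + v" by blast
    then have "v \<in> (\<lambda>x. -a + x) -` F" using V(2) img_left[of a F] by blast
    then show "y \<in> F" using \<open>y = -a + v\<close> by simp
  qed
  ultimately have "(+) (-a) ` V = {}" using F by blast
  then show "V = {}" by simp
qed

lemma meager_left: "meager M \<Longrightarrow> meager ((+) (a::'a::topological_group_add) ` M)"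
  unfolding meager_def
proof -
  assume "\<exists>\<F>. countable \<F> \<and> (\<forall>F\<in>\<F>. nwd F) \<and> M \<subseteq> \<Union> \<F>"
  then obtain \<F> where "countable \<F>" "\<forall>F\<in>\<F>. nwd F" "M \<subseteq> \<Union> \<F>" by blast
  then show "\<exists>\<F>. countable \<F> \<and> (\<forall>F\<in>\<F>. nwd F) \<and> (+) a ` M \<subseteq> \<Union> \<F>"
  proof (intro exI conjI)
    show "countable ((\<lambda>F. (+) a ` F) ` \<F>)" using \<open>countable \<F>\<close> by simp
    show "\<forall>F\<in>(\<lambda>F. (+) a ` F) ` \<F>. nwd F" using \<open>\<forall>F\<in>\<F>. nwd F\<close> nwd_left by blast
    show "(+) a ` M \<subseteq> \<Union>((\<lambda>F. (+) a ` F) ` \<F>)" using \<open>M \<subseteq> \<Union> \<F>\<close> by blast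
  qed
qed

definition bp :: "'a::topological_space set \<Rightarrow> bool" where
  "bp A \<longleftrightarrow> (\<exists>U. open U \<and> meager (A - U) \<and> meager (U - A))"

lemma bp_open: "open U \<Longrightarrow> bp U"
proof -
  have "meager {}" unfolding meager_def by (intro exI[of _ "{}"]) simp
  then show "open U \<Longrightarrow> bp U" unfolding bp_def by (intro exI[of _ U]) simp
qed

lemma bp_compl: "bp A \<Longrightarrow> bp (UNIV - A)"
proof -
  assume "bp A"
  then obtain U where U: "open U" "meager (A - U)" "meager (U - A)" unfolding bp_def by blast
  define V where "V = - closure U"
  have "open V" unfolding V_def by auto
  have nwd: "nwd (closure U - U)" unfolding nwd_def
  proof (intro conjI allI impI)
    show "closed (closure U - U)" using U(1) by (simp add: Diff_eq closed_Int open_closed)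
    fix W assume "open W" "W \<subseteq> closure U - U"
    then show "W = {}" using open_Int_closure_eq_empty[of W U] by blast
  qed
  have "(UNIV - A) - V \<subseteq> (U - A) \<union> (closure U - U)" unfolding V_def by auto
  then have "meager ((UNIV - A) - V)"
    using meager_Un[OF U(3) meager_nwd[OF nwd]] meager_subset by blast
  moreover have "V - (UNIV - A) \<subseteq> A - U" unfolding V_def using closure_subset[of U] by auto
  then have "meager (V - (UNIV - A))" using U(2) meager_subset by blast
  ultimately show ?thesis unfolding bp_def using \<open>open V\<close> by blast
qed

lemma bp_Union: "(\<And>i::nat. bp (A i)) \<Longrightarrow> bp (\<Union>(range A))"
proof -
  assume "\<And>i. bp (A i)"
  then obtain U where U: "\<And>i. open (U i) \<and> meager (A i - U i) \<and> meager (U i - A i)"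
    unfolding bp_def by metis
  have m1: "meager (\<Union>(range (\<lambda>i. A i - U i)))" by (rule meager_Union) (use U in \<open>auto intro: countable_image\<close>)
  have m2: "meager (\<Union>(range (\<lambda>i. U i - A i)))" by (rule meager_Union) (use U in \<open>auto intro: countable_image\<close>)
  show ?thesis unfolding bp_def
  proof (intro exI conjI)
    show "open (\<Union>(range U))" using U by auto
    show "meager (\<Union>(range A) - \<Union>(range U))" by (rule meager_subset[OF m1]) blast
    show "meager (\<Union>(range U) - \<Union>(range A))" by (rule meager_subset[OF m2]) blast
  qed
qed

lemma bp_borel: "A \<in> sets borel \<Longrightarrow> bp A"
  unfolding sets_borel
proof (induction rule: sigma_sets.induct)
  case (Basic a) then show ?case by (auto intro: bp_open)
next
  case Empty then show ?case by (auto intro: bp_open)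
next
  case (Compl a) then show ?case by (simp add: bp_compl)
next
  case (Union a) show ?case by (intro bp_Union) (rule Union.IH)
qed


lemma hausdorff_euclidean_t2: "Hausdorff_space (euclidean :: 'a::t2_space topology)"
  unfolding Hausdorff_space_def disjnt_def using hausdorff by fastforce

lemma baire_open:
  fixes U :: "'a::t2_space set"
  assumes lc: "locally_compact_space (euclidean::'a topology)" and U: "open U" "U \<noteq> {}"
  shows "\<not> meager U"
proof
  assume "meager U"
  then have "\<exists>\<F>. countable \<F> \<and> (\<forall>F\<in>\<F>. nwd F) \<and> U \<subseteq> \<Union>\<F>" unfolding meager_def .
  then obtain \<F> where F0: "countable \<F> \<and> (\<forall>F\<in>\<F>. nwd F) \<and> U \<subseteq> \<Union>\<F>" ..
  then have F: "countable \<F>" "\<forall>F\<in>\<F>. nwd F" "U \<subseteq> \<Union>\<F>" by simp_all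
  have "euclidean interior_of \<Union>\<F> = {}"
  proof (rule Baire_category_alt)
    show "completely_metrizable_space (euclidean::'a topology) \<or> locally_compact_space (euclidean::'a topology) \<and> regular_space (euclidean::'a topology)"
    proof (rule disjI2)
      have "locally_compact_space (euclidean::'a topology) \<and> (Hausdorff_space (euclidean::'a topology) \<or> regular_space (euclidean::'a topology))"
        using lc hausdorff_euclidean_t2[where 'a='a] by blast
      then show "locally_compact_space (euclidean::'a topology) \<and> regular_space (euclidean::'a topology)"
        by (simp only: locally_compact_Hausdorff_or_regular)
    qed
    show "countable \<F>" by (rule F(1))
    fix T assume "T \<in> \<F>"
    then have "nwd T" using F(2) by simp
    then show "closedin euclidean T \<and> euclidean interior_of T = {}"
      unfolding nwd_def interior_of_eq_empty by simp
  qed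
  moreover have "U \<subseteq> euclidean interior_of \<Union>\<F>"
    using F(3) U(1) by (intro interior_of_maximal) auto
  ultimately show False using U(2) by simp
qed

lemma lf_bounded_nbhd:
  fixes l :: "'a::{topological_group_add,t2_space} \<Rightarrow> real"
  assumes lc: "locally_compact_space (euclidean::'a topology)" and lf: "length_function l"
  shows "\<exists>W D. open W \<and> 0 \<in> W \<and> (\<forall>w\<in>W. l w \<le> D)"
proof -
  have meas: "l \<in> borel_measurable borel" and sym: "\<And>g. l g = l (- g)"
    and tri: "\<And>g h. l (g + h) \<le> l g + l h"
    using lf unfolding length_function_def by auto
  define L where "L n = {g. l g \<le> real n}" for n :: nat
  have Lb: "L n \<in> sets borel" for n
  proof -
    have "l -` {..real n} \<in> sets borel"
      by (rule measurable_sets_borel[OF meas]) simp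
    moreover have "l -` {..real n} = L n" unfolding L_def by auto
    ultimately show ?thesis by simp
  qed
  have cover: "UNIV = \<Union>(range L)"
  proof (rule set_eqI)
    fix g
    have "g \<in> L (nat \<lceil>l g\<rceil>)" unfolding L_def using real_nat_ceiling_ge by simp
    then show "g \<in> UNIV \<longleftrightarrow> g \<in> \<Union>(range L)" by blast
  qed
  have "\<exists>n. \<not> meager (L n)"
  proof (rule ccontr)
    assume "\<not> (\<exists>n. \<not> meager (L n))"
    then have "meager (\<Union>(range L))" by (intro meager_Union) auto
    then have "meager (UNIV::'a set)" using cover by simp
    then show False using baire_open[OF lc, of UNIV] by simp
  qed
  then obtain n where n: "\<not> meager (L n)" by blast
  obtain U where U: "open U" "meager (L n - U)" "meager (U - L n)"
    using bp_borel[OF Lb[of n]] unfolding bp_def by blast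
  have "U \<noteq> {}" using U(2) n by auto
  then obtain u where u: "u \<in> U" by blast
  define W where "W = (\<lambda>x. x + -u) ` U"
  have "open W" unfolding W_def using U(1) by (rule tg_open_right)
  moreover have "0 \<in> W" unfolding W_def using u by (intro image_eqI[of _ _ u]) simp_all
  moreover have "\<forall>w\<in>W. l w \<le> 2 * real n"
  proof
    fix w assume "w \<in> W"
    then obtain x where x: "x \<in> U" "w = x + -u" unfolding W_def by blast
    have wu: "w + u \<in> U" using x by (simp add: add.assoc)
    define Ob where "Ob = U \<inter> (+) w ` U"
    have "open Ob" unfolding Ob_def using U(1) by (intro open_Int tg_open_left)
    have "w + u \<in> Ob" unfolding Ob_def using wu u by blast
    have "\<exists>a. a \<in> L n \<and> a \<in> (+) w ` L n"
    proof (rule ccontr)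
      assume na: "\<not> (\<exists>a. a \<in> L n \<and> a \<in> (+) w ` L n)"
      have "Ob \<subseteq> (U - L n) \<union> (+) w ` (U - L n)"
      proof
        fix y assume y: "y \<in> Ob"
        show "y \<in> (U - L n) \<union> (+) w ` (U - L n)"
        proof (cases "y \<in> L n")
          case False then show ?thesis using y unfolding Ob_def by blast
        next
          case True
          then have "y \<notin> (+) w ` L n" using na by blast
          moreover obtain z where "z \<in> U" "y = w + z" using y unfolding Ob_def by blast
          ultimately show ?thesis by blast
        qed
      qed
      moreover have "meager ((U - L n) \<union> (+) w ` (U - L n))"
        using U(3) by (intro meager_Un meager_left)
      ultimately have "meager Ob" by (rule meager_subset[rotated])
      then show False using baire_open[OF lc \<open>open Ob\<close>] \<open>w + u \<in> Ob\<close> by blast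
    qed
    then obtain a b where ab: "a \<in> L n" "b \<in> L n" "a = w + b" by blast
    have "w = a + - b" using ab(3) by (simp add: add.assoc)
    then have "l w \<le> l a + l (- b)" using tri[of a "-b"] by simp
    also have "\<dots> = l a + l b" using sym[of b] by simp
    also have "\<dots> \<le> 2 * real n" using ab unfolding L_def by simp
    finally show "l w \<le> 2 * real n" .
  qed
  ultimately show ?thesis by blast
qed


lemma rc_mem: "is_subgroup H \<Longrightarrow> g \<in> rcoset H g"
  unfolding rcoset_def is_subgroup_def by force

lemma rc_eq:
  assumes H: "is_subgroup H" and x: "x \<in> rcoset H a"
  shows "rcoset H x = rcoset H a"
proof -
  from x obtain h where h: "h \<in> H" "x = h + a" unfolding rcoset_def by blast
  have Hadd: "\<And>p q. p \<in> H \<Longrightarrow> q \<in> H \<Longrightarrow> p + q \<in> H" and Hneg: "\<And>p. p \<in> H \<Longrightarrow> - p \<in> H"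
    using H unfolding is_subgroup_def by auto
  show ?thesis
  proof (rule set_eqI)
    fix y
    show "y \<in> rcoset H x \<longleftrightarrow> y \<in> rcoset H a"
    proof
      assume "y \<in> rcoset H x"
      then obtain k where "k \<in> H" "y = k + x" unfolding rcoset_def by blast
      then have "k + h \<in> H" "y = (k + h) + a" using h Hadd by (auto simp: add.assoc)
      then show "y \<in> rcoset H a" unfolding rcoset_def by blast
    next
      assume "y \<in> rcoset H a"
      then obtain k where "k \<in> H" "y = k + a" unfolding rcoset_def by blast
      moreover have "k + - h \<in> H" using h Hadd Hneg \<open>k \<in> H\<close> by blast
      moreover have "y = (k + - h) + x" using h \<open>y = k + a\<close> by (simp add: add.assoc[symmetric])
      ultimately have "k + - h \<in> H" "y = (k + - h) + x" by simp_all
      then show "y \<in> rcoset H x" unfolding rcoset_def by blast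
    qed
  qed
qed

lemma rc_same: "is_subgroup H \<Longrightarrow> g \<in> c \<Longrightarrow> c \<in> coset_space H \<Longrightarrow> c = rcoset H g"
proof -
  assume H: "is_subgroup H" and g: "g \<in> c" and c: "c \<in> coset_space H"
  from c obtain a where a: "c = rcoset H a" unfolding coset_space_def by (rule rangeE)
  show "c = rcoset H g" using rc_eq[OF H, of g a] g a by simp
qed

lemma istop_coset:
  assumes H: "is_subgroup (H::'a::{topological_space,group_add} set)"
  shows "istopology (\<lambda>U. U \<subseteq> coset_space H \<and> open (\<Union>U))"
  unfolding istopology_def
proof (intro conjI)
  show "\<forall>S T. S \<subseteq> coset_space H \<and> open (\<Union>S) \<longrightarrow> T \<subseteq> coset_space H \<and> open (\<Union>T) \<longrightarrow> S \<inter> T \<subseteq> coset_space H \<and> open (\<Union>(S \<inter> T))"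
  proof (intro allI impI)
  fix S T :: "'a set set"
  assume S: "S \<subseteq> coset_space H \<and> open (\<Union>S)" and T: "T \<subseteq> coset_space H \<and> open (\<Union>T)"
  have "\<Union>(S \<inter> T) = \<Union>S \<inter> \<Union>T"
  proof
    show "\<Union>(S \<inter> T) \<subseteq> \<Union>S \<inter> \<Union>T" by blast
    show "\<Union>S \<inter> \<Union>T \<subseteq> \<Union>(S \<inter> T)"
    proof
      fix x assume "x \<in> \<Union>S \<inter> \<Union>T"
      then obtain s t where st: "s \<in> S" "t \<in> T" "x \<in> s" "x \<in> t" by blast
      have "s = rcoset H x" using rc_same[OF H st(3)] st(1) S by blast
      moreover have "t = rcoset H x" using rc_same[OF H st(4)] st(2) T by blast
      ultimately show "x \<in> \<Union>(S \<inter> T)" using st by blast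
    qed
  qed
  then show "S \<inter> T \<subseteq> coset_space H \<and> open (\<Union>(S \<inter> T))" using S T by auto
  qed
  show "\<forall>K. (\<forall>U\<in>K. U \<subseteq> coset_space H \<and> open (\<Union>U)) \<longrightarrow> \<Union>K \<subseteq> coset_space H \<and> open (\<Union>(\<Union>K))"
  proof (intro allI impI)
    fix K :: "'a set set set"
    assume K: "\<forall>U\<in>K. U \<subseteq> coset_space H \<and> open (\<Union>U)"
    have "\<Union>(\<Union>K) = (\<Union>U\<in>K. \<Union>U)" by blast
    moreover have "open (\<Union>U\<in>K. \<Union>U)" using K by (intro open_UN) auto
    ultimately show "\<Union>K \<subseteq> coset_space H \<and> open (\<Union>(\<Union>K))" using K by auto
  qed
qed

lemma openin_coset:
  "is_subgroup H \<Longrightarrow> openin (coset_topology H) U \<longleftrightarrow> U \<subseteq> coset_space H \<and> open (\<Union>U)"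
proof -
  assume H: "is_subgroup H"
  show ?thesis unfolding coset_topology_def using topology_inverse'[OF istop_coset[OF H]] by simp
qed

lemma topspace_coset:
  assumes H: "is_subgroup H" shows "topspace (coset_topology H) = coset_space H"
proof -
  have "\<Union>(coset_space H) = UNIV" using rc_mem[OF H] unfolding coset_space_def by blast
  then have "openin (coset_topology H) (coset_space H)" using openin_coset[OF H] by simp
  then show ?thesis using openin_coset[OF H] openin_subset
    by (metis openin_topspace subset_antisym)
qed

lemma vimage_coset:
  assumes H: "is_subgroup H" and U: "U \<subseteq> coset_space H"
  shows "{x. rcoset H x \<in> U} = \<Union>U"
proof (rule set_eqI)
  fix x
  show "x \<in> {x. rcoset H x \<in> U} \<longleftrightarrow> x \<in> \<Union>U"
  proof
    assume "x \<in> {x. rcoset H x \<in> U}" then show "x \<in> \<Union>U" using rc_mem[OF H, of x] by blast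
  next
    assume "x \<in> \<Union>U"
    then obtain c where "c \<in> U" "x \<in> c" by blast
    then have "c = rcoset H x" using rc_same[OF H] U by blast
    then show "x \<in> {x. rcoset H x \<in> U}" using \<open>c \<in> U\<close> by simp
  qed
qed

lemma cont_coset:
  assumes H: "is_subgroup H"
  shows "continuous_map euclidean (coset_topology H) (rcoset H)"
  unfolding continuous_map
proof (intro conjI allI impI)
  show "rcoset H ` topspace euclidean \<subseteq> topspace (coset_topology H)"
    unfolding topspace_coset[OF H] coset_space_def by auto
  fix U assume "openin (coset_topology H) U"
  then have U: "U \<subseteq> coset_space H" "open (\<Union>U)" using openin_coset[OF H] by auto
  then show "openin euclidean {x \<in> topspace euclidean. rcoset H x \<in> U}"
    using vimage_coset[OF H U(1)] by simp
qed

lemma open_image_coset: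
  assumes H: "is_subgroup H" and Q: "open (Q::'a::topological_group_add set)"
  shows "openin (coset_topology H) (rcoset H ` Q)"
proof -
  have "\<Union>(rcoset H ` Q) = (\<Union>h\<in>H. (+) h ` Q)" unfolding rcoset_def by blast
  moreover have "open (\<Union>h\<in>H. (+) h ` Q)" using Q by (intro open_UN ballI tg_open_left)
  ultimately show ?thesis unfolding openin_coset[OF H] coset_space_def by auto
qed


lemma pair_lb:
  fixes H :: "'a::topological_group_add set" and l :: "'a \<Rightarrow> real"
  assumes H: "is_subgroup H" and lc: "locally_compact_space (euclidean :: 'a topology)"
    and lb: "locally_bounded_lf l" and inv: "\<And>h g. h \<in> H \<Longrightarrow> l (h + g) \<le> l g"
  shows "locally_bounded_pair H l"
  unfolding locally_bounded_pair_def
proof (intro allI impI)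
  fix C assume cC: "compactin (coset_topology H) C"
  define f where "f K = rcoset H ` interior K" for K :: "'a set"
  define \<U> where "\<U> = f ` {K. compact K}"
  have opU: "\<forall>U\<in>\<U>. openin (coset_topology H) U"
    unfolding \<U>_def f_def using open_image_coset[OF H] by blast
  have CU: "C \<subseteq> \<Union>\<U>"
  proof
    fix c assume "c \<in> C"
    then have "c \<in> coset_space H" using compactin_subset_topspace[OF cC] topspace_coset[OF H] by blast
    then obtain g where g: "c = rcoset H g" unfolding coset_space_def by (rule rangeE)
    obtain U K where UK: "openin euclidean U" "compactin euclidean K" "g \<in> U" "U \<subseteq> K"
      using lc unfolding locally_compact_space_def by (metis UNIV_I topspace_euclidean)
    have "open U" using UK(1) by simp
    then have "U \<subseteq> interior K" by (rule interior_maximal[OF UK(4)])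
    then have "g \<in> interior K" using UK(3) by blast
    then have "c \<in> f K" unfolding f_def g by blast
    moreover have "compact K" using UK by simp
    ultimately show "c \<in> \<Union>\<U>" unfolding \<U>_def by blast
  qed
  obtain \<F> where F: "finite \<F>" "\<F> \<subseteq> \<U>" "C \<subseteq> \<Union>\<F>"
    using cC opU CU unfolding compactin_def by meson
  obtain \<K> where K: "\<K> \<subseteq> {K. compact K}" "finite \<K>" "\<F> = f ` \<K>"
    using finite_subset_image[OF F(1) F(2)[unfolded \<U>_def]] by blast
  have "compact (\<Union>\<K>)" using K by (intro compact_Union) auto
  then obtain B where B: "\<forall>g\<in>\<Union>\<K>. l g \<le> B" using lb unfolding locally_bounded_lf_def by blast
  show "\<exists>B. \<forall>c\<in>C. \<forall>g\<in>c. l g \<le> B"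
  proof (intro exI ballI)
    fix c g assume c: "c \<in> C" and g: "g \<in> c"
    then obtain K where "K \<in> \<K>" "c \<in> f K" using F(3) K(3) by blast
    then obtain v where v: "v \<in> interior K" "c = rcoset H v" unfolding f_def by blast
    then have "v \<in> \<Union>\<K>" using \<open>K \<in> \<K>\<close> interior_subset by blast
    obtain h where h: "h \<in> H" "g = h + v" using g v(2) unfolding rcoset_def by blast
    have "l g \<le> l v" using inv[OF h(1)] h(2) by simp
    also have "\<dots> \<le> B" using B \<open>v \<in> \<Union>\<K>\<close> by blast
    finally show "l g \<le> B" .
  qed
qed

lemma sum_compact:
  fixes H K :: "'a::{topological_group_add} set"
  assumes "compact H" "compact K"
  shows "compact ((\<lambda>p. fst p + snd p) ` (H \<times> K))"
  by (intro compact_continuous_image continuous_intros compact_Times assms)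

lemma pair_proper:
  fixes H :: "'a::{topological_group_add,t2_space} set" and l :: "'a \<Rightarrow> real"
  assumes H: "is_subgroup H" and cH: "compact H" and pr: "proper_lf l"
  shows "proper_pair H l"
  unfolding proper_pair_def
proof
  fix n :: real
  define K where "K = closure (l -` {..n})"
  have cK: "compact K" using pr unfolding proper_lf_def K_def by blast
  define S where "S = (\<lambda>p. fst p + snd p) ` (H \<times> K)"
  have "closed S" unfolding S_def by (intro compact_imp_closed sum_compact cH cK)
  have q: "continuous_map euclidean (coset_topology H) (rcoset H)" by (rule cont_coset[OF H])
  have ci: "compactin (coset_topology H) (rcoset H ` K)"
    by (rule image_compactin[OF _ q]) (simp add: cK)
  have sub: "rcoset H ` K \<subseteq> coset_space H" unfolding coset_space_def by blast
  have eq: "\<Union>(coset_space H - rcoset H ` K) = - S"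
  proof (rule set_eqI)
    fix x
    have "x \<in> \<Union>(coset_space H - rcoset H ` K) \<longleftrightarrow> rcoset H x \<notin> rcoset H ` K"
    proof
      assume "x \<in> \<Union>(coset_space H - rcoset H ` K)"
      then obtain c where c: "c \<in> coset_space H" "c \<notin> rcoset H ` K" "x \<in> c" by blast
      then show "rcoset H x \<notin> rcoset H ` K" using rc_same[OF H c(3) c(1)] by simp
    next
      assume "rcoset H x \<notin> rcoset H ` K"
      moreover have "rcoset H x \<in> coset_space H" unfolding coset_space_def by simp
      ultimately have "rcoset H x \<in> coset_space H - rcoset H ` K" by (rule DiffI[rotated])
      then show "x \<in> \<Union>(coset_space H - rcoset H ` K)" using rc_mem[OF H, of x] by (rule UnionI)
    qed
    moreover have "rcoset H x \<in> rcoset H ` K \<longleftrightarrow> x \<in> S"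
    proof
      assume "rcoset H x \<in> rcoset H ` K"
      then obtain k where "k \<in> K" "rcoset H x = rcoset H k" by blast
      then have "x \<in> rcoset H k" using rc_mem[OF H, of x] by simp
      then obtain h where "h \<in> H" "x = h + k" unfolding rcoset_def by blast
      then show "x \<in> S" unfolding S_def using \<open>k \<in> K\<close> by (intro image_eqI[of _ _ "(h, k)"]) auto
    next
      assume "x \<in> S"
      then obtain p where p: "p \<in> H \<times> K" "x = fst p + snd p" unfolding S_def by (rule imageE)
      define h k where "h = fst p" and "k = snd p"
      have hk: "h \<in> H" "k \<in> K" "x = h + k" using p unfolding h_def k_def by auto
      then have "x \<in> rcoset H k" unfolding rcoset_def by blast
      then have "rcoset H x = rcoset H k" by (rule rc_eq[OF H])
      then show "rcoset H x \<in> rcoset H ` K" using hk(2) by simp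
    qed
    ultimately show "x \<in> \<Union>(coset_space H - rcoset H ` K) \<longleftrightarrow> x \<in> - S" by simp
  qed
  have "closedin (coset_topology H) (rcoset H ` K)"
    unfolding closedin_def topspace_coset[OF H] openin_coset[OF H] eq
    using sub \<open>closed S\<close> by (simp add: open_Compl)
  moreover have "rcoset H ` (l -` {..n}) \<subseteq> rcoset H ` K" unfolding K_def by (rule image_mono) (rule closure_subset)
  ultimately have "coset_topology H closure_of (rcoset H ` (l -` {..n})) \<subseteq> rcoset H ` K"
    by (intro closure_of_minimal)
  then show "compactin (coset_topology H) (coset_topology H closure_of (rcoset H ` (l -` {..n})))"
    by (rule closed_compactin[OF ci]) simp
qed


lemma closure_map:
  assumes f: "continuous_on UNIV f" and ST: "f ` S \<subseteq> T" and x: "x \<in> closure S"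
  shows "f x \<in> closure T"
proof -
  have "f ` S \<subseteq> closure T" using ST closure_subset[of T] by (rule subset_trans)
  then have "f ` closure S \<subseteq> closure T"
    by (intro image_closure_subset continuous_on_subset[OF f]) simp_all
  then show ?thesis using x by blast
qed

lemma nat_ceiling_le: "0 \<le> (x::real) \<Longrightarrow> real (nat \<lceil>x\<rceil>) \<le> x + 1"
  by linarith

theorem lemma2p8:
  fixes H :: "'a::{topological_group_add, t2_space} set" and l :: "'a \<Rightarrow> real"
  assumes "locally_compact_space (euclidean :: 'a topology)"
    and "is_subgroup H" and "compact H"
    and "length_function l"
    and "bounded (l ` H)"
  shows "\<exists>l'. length_function l' \<and> lf_equivalent l l' \<and>
           H \<subseteq> {g. l' g = 0} \<and> pair_length_function H l' \<and>
           (locally_bounded_lf l \<longrightarrow> locally_bounded_lf l' \<and> locally_bounded_pair H l') \<and>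
           (proper_lf l \<longrightarrow> proper_lf l' \<and> proper_pair H l')"
proof -
  note lc = assms(1) and Hsg = assms(2) and cH = assms(3) and lf = assms(4)
  have l0: "l 0 = 0" and lnn: "\<And>g. 0 \<le> l g" and sym: "\<And>g. l g = l (- g)"
    and tri: "\<And>g h. l (g + h) \<le> l g + l h"
    using lf unfolding length_function_def by auto
  have H0: "0 \<in> H" and Hadd: "\<And>p q. p \<in> H \<Longrightarrow> q \<in> H \<Longrightarrow> p + q \<in> H"
    and Hneg: "\<And>p. p \<in> H \<Longrightarrow> - p \<in> H"
    using Hsg unfolding is_subgroup_def by auto
  obtain C0 where C0: "\<forall>x\<in>l ` H. \<bar>x\<bar> \<le> C0" using assms(5) unfolding bounded_real by blast
  define C where "C = max C0 0"
  have C: "\<And>h. h \<in> H \<Longrightarrow> l h \<le> C" "0 \<le> C"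
    using C0 unfolding C_def by force+
  define A where "A n = {g. \<forall>h1\<in>H. \<forall>h2\<in>H. l (h1 + g + h2) \<le> real n}" for n :: nat
  have A1: "\<And>g n. g \<in> A n \<Longrightarrow> l g \<le> real n"
  proof -
    fix g n assume "g \<in> A n"
    then have "l (0 + g + 0) \<le> real n" unfolding A_def using H0 by blast
    then show "l g \<le> real n" by simp
  qed
  have A2: "\<And>g n. l g + 2 * C \<le> real n \<Longrightarrow> g \<in> A n"
  proof -
    fix g n assume gn: "l g + 2 * C \<le> real n"
    show "g \<in> A n" unfolding A_def
    proof (intro CollectI ballI)
      fix h1 h2 assume h: "h1 \<in> H" "h2 \<in> H"
      have "l (h1 + g + h2) \<le> l (h1 + g) + l h2" by (rule tri)
      also have "\<dots> \<le> l h1 + l g + l h2" using tri[of h1 g] by simp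
      also have "\<dots> \<le> real n" using C(1)[OF h(1)] C(1)[OF h(2)] gn by simp
      finally show "l (h1 + g + h2) \<le> real n" .
    qed
  qed
  have A3: "\<And>g k m n. g \<in> A m \<Longrightarrow> k \<in> A n \<Longrightarrow> g + k \<in> A (m + n)"
  proof -
    fix g k m n assume g: "g \<in> A m" and k: "k \<in> A n"
    show "g + k \<in> A (m + n)" unfolding A_def
    proof (intro CollectI ballI)
      fix h1 h2 assume h: "h1 \<in> H" "h2 \<in> H"
      have "l (h1 + g + 0) \<le> real m" using g h H0 unfolding A_def by blast
      moreover have "l (0 + k + h2) \<le> real n" using k h H0 unfolding A_def by blast
      moreover have "l (h1 + (g + k) + h2) \<le> l (h1 + g) + l (k + h2)"
        using tri[of "h1 + g" "k + h2"] by (simp add: add.assoc)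
      ultimately show "l (h1 + (g + k) + h2) \<le> real (m + n)" by simp
    qed
  qed
  have A4: "\<And>g n. g \<in> A n \<Longrightarrow> - g \<in> A n"
  proof -
    fix g n assume g: "g \<in> A n"
    show "- g \<in> A n" unfolding A_def
    proof (intro CollectI ballI)
      fix h1 h2 assume h: "h1 \<in> H" "h2 \<in> H"
      have "l (- h2 + g + - h1) \<le> real n" using g Hneg h unfolding A_def by blast
      moreover have e: "- (h1 + - g + h2) = - h2 + g + - h1" by (simp only: minus_add minus_minus add.assoc)
      moreover have "l (h1 + - g + h2) = l (- h2 + g + - h1)" using sym[of "h1 + - g + h2"] e by (simp only:)
      ultimately show "l (h1 + - g + h2) \<le> real n" by (simp only:)
    qed
  qed
  have A5l: "\<And>g h n. h \<in> H \<Longrightarrow> g \<in> A n \<Longrightarrow> h + g \<in> A n"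
  proof -
    fix g h n assume h: "h \<in> H" and g: "g \<in> A n"
    show "h + g \<in> A n" unfolding A_def
    proof (intro CollectI ballI)
      fix h1 h2 assume hh: "h1 \<in> H" "h2 \<in> H"
      have "l ((h1 + h) + g + h2) \<le> real n" using g Hadd[OF hh(1) h] hh(2) unfolding A_def by blast
      then show "l (h1 + (h + g) + h2) \<le> real n" by (simp add: add.assoc)
    qed
  qed
  have A5r: "\<And>g h n. h \<in> H \<Longrightarrow> g \<in> A n \<Longrightarrow> g + h \<in> A n"
  proof -
    fix g h n assume h: "h \<in> H" and g: "g \<in> A n"
    show "g + h \<in> A n" unfolding A_def
    proof (intro CollectI ballI)
      fix h1 h2 assume hh: "h1 \<in> H" "h2 \<in> H"
      have "l (h1 + g + (h + h2)) \<le> real n" using g Hadd[OF h hh(2)] hh(1) unfolding A_def by blast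
      then show "l (h1 + (g + h) + h2) \<le> real n" by (simp add: add.assoc)
    qed
  qed
  have Amono: "\<And>m n. m \<le> n \<Longrightarrow> A m \<subseteq> A n"
  proof
    fix m n x assume mn: "m \<le> n" and x: "x \<in> A m"
    have "real m \<le> real n" using mn by simp
    then show "x \<in> A n" using x unfolding A_def mem_Collect_eq by (meson order_trans)
  qed
  have Cl3: "\<And>x y m n. x \<in> closure (A m) \<Longrightarrow> y \<in> closure (A n) \<Longrightarrow> x + y \<in> closure (A (m + n))"
  proof -
    fix x y m n assume "x \<in> closure (A m)" "y \<in> closure (A n)"
    then have "(x, y) \<in> closure (A m \<times> A n)" by (simp add: closure_Times)
    moreover have "continuous_on UNIV (\<lambda>p::'a \<times> 'a. fst p + snd p)" by (intro continuous_intros)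
    moreover have "(\<lambda>p. fst p + snd p) ` (A m \<times> A n) \<subseteq> A (m + n)" using A3 by auto
    ultimately show "x + y \<in> closure (A (m + n))" using closure_map by fastforce
  qed
  have Cl4: "\<And>g n. g \<in> closure (A n) \<Longrightarrow> - g \<in> closure (A n)"
  proof -
    fix g n assume g: "g \<in> closure (A n)"
    have "continuous_on UNIV (uminus :: 'a \<Rightarrow> 'a)" by (intro continuous_intros)
    moreover have "uminus ` A n \<subseteq> A n" using A4 by auto
    ultimately show "- g \<in> closure (A n)" by (rule closure_map[OF _ _ g])
  qed
  have Cl5l: "\<And>g h n. h \<in> H \<Longrightarrow> g \<in> closure (A n) \<Longrightarrow> h + g \<in> closure (A n)"
  proof -
    fix g h n assume h: "h \<in> H" and g: "g \<in> closure (A n)"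
    have "continuous_on UNIV ((+) h)" by (intro continuous_intros)
    moreover have "(+) h ` A n \<subseteq> A n" using A5l h by auto
    ultimately show "h + g \<in> closure (A n)" by (rule closure_map[OF _ _ g])
  qed
  have Cl5r: "\<And>g h n. h \<in> H \<Longrightarrow> g \<in> closure (A n) \<Longrightarrow> g + h \<in> closure (A n)"
  proof -
    fix g h n assume h: "h \<in> H" and g: "g \<in> closure (A n)"
    have "continuous_on UNIV (\<lambda>x. x + h)" by (intro continuous_intros)
    moreover have "(\<lambda>x. x + h) ` A n \<subseteq> A n" using A5r h by auto
    ultimately show "g + h \<in> closure (A n)" by (rule closure_map[OF _ _ g])
  qed
  define F where "F g = (LEAST n. g \<in> closure (A n))" for g
  have Fex: "\<And>g. g \<in> closure (A (nat \<lceil>l g + 2 * C\<rceil>))"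
  proof -
    fix g
    have "l g + 2 * C \<le> real (nat \<lceil>l g + 2 * C\<rceil>)" by (rule real_nat_ceiling_ge)
    then have "g \<in> A (nat \<lceil>l g + 2 * C\<rceil>)" by (rule A2)
    then show "g \<in> closure (A (nat \<lceil>l g + 2 * C\<rceil>))" by (rule subsetD[OF closure_subset])
  qed
  have F_in: "\<And>g. g \<in> closure (A (F g))"
    unfolding F_def using Fex by (rule LeastI)
  have F_le: "\<And>g n. g \<in> closure (A n) \<Longrightarrow> F g \<le> n"
    unfolding F_def by (rule Least_le)
  have F_iff: "\<And>g n. F g \<le> n \<longleftrightarrow> g \<in> closure (A n)"
  proof
    fix g n assume "F g \<le> n"
    then have "closure (A (F g)) \<subseteq> closure (A n)" by (intro closure_mono Amono)
    then show "g \<in> closure (A n)" using F_in[of g] by (rule subsetD)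
  next
    fix g n assume "g \<in> closure (A n)" then show "F g \<le> n" by (rule F_le)
  qed
  have Fsym: "\<And>g. F (- g) = F g"
  proof -
    fix g
    have "F (- g) \<le> F g" by (rule F_le[OF Cl4[OF F_in[of g]]])
    moreover have "F g \<le> F (- g)" using F_le[of g] Cl4[OF F_in[of "- g"]] by simp
    ultimately show "F (- g) = F g" by simp
  qed
  have Fadd: "\<And>g k. F (g + k) \<le> F g + F k"
    by (rule F_le[OF Cl3[OF F_in F_in]])
  have Fl: "\<And>g h. h \<in> H \<Longrightarrow> F (h + g) \<le> F g"
    by (rule F_le[OF Cl5l[OF _ F_in]])
  have Fr: "\<And>g h. h \<in> H \<Longrightarrow> F (g + h) \<le> F g"
    by (rule F_le[OF Cl5r[OF _ F_in]])
  define l' where "l' g = (if g \<in> H then 0 else real (F g))" for g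
  have l'nn: "\<And>g. 0 \<le> l' g" unfolding l'_def by simp
  have l'H: "\<And>h. h \<in> H \<Longrightarrow> l' h = 0" unfolding l'_def by simp
  have Hneg_iff: "\<And>g. - g \<in> H \<longleftrightarrow> g \<in> H" using Hneg by force
  have l'sym: "\<And>g. l' g = l' (- g)" unfolding l'_def using Hneg_iff Fsym by simp
  have l'tri: "\<And>g k. l' (g + k) \<le> l' g + l' k"
  proof -
    fix g k
    show "l' (g + k) \<le> l' g + l' k"
    proof (cases "g + k \<in> H")
      case True then show ?thesis using l'nn l'H by (simp add: add_nonneg_nonneg)
    next
      case gk: False
      show ?thesis
      proof (cases "g \<in> H")
        case True
        then have "k \<notin> H" using gk Hadd by blast
        then show ?thesis using True gk Fl[OF True, of k] unfolding l'_def by simp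
      next
        case g: False
        show ?thesis
        proof (cases "k \<in> H")
          case True
          then show ?thesis using g gk Fr[OF True, of g] unfolding l'_def by simp
        next
          case False
          then show ?thesis using g gk Fadd[of g k] unfolding l'_def by simp
        qed
      qed
    qed
  qed
  have Fmeas: "(\<lambda>g. real (F g)) \<in> borel_measurable borel"
    unfolding borel_measurable_iff_le
  proof
    fix a :: real
    show "{w \<in> space borel. real (F w) \<le> a} \<in> sets borel"
    proof (cases "a < 0")
      case True
      then have "{w \<in> space borel. real (F w) \<le> a} = {}" by auto
      then show ?thesis by simp
    next
      case False
      have "{w \<in> space borel. real (F w) \<le> a} = closure (A (nat \<lfloor>a\<rfloor>))"
      proof (rule set_eqI)
        fix w
        have "real (F w) \<le> a \<longleftrightarrow> F w \<le> nat \<lfloor>a\<rfloor>" using False by linarith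
        then show "w \<in> {w \<in> space borel. real (F w) \<le> a} \<longleftrightarrow> w \<in> closure (A (nat \<lfloor>a\<rfloor>))"
          using F_iff by simp
      qed
      then show ?thesis by simp
    qed
  qed
  have l'meas: "l' \<in> borel_measurable borel"
  proof -
    have "closed H" using cH by (rule compact_imp_closed)
    then have "H \<inter> space borel \<in> sets borel" by simp
    then have "(\<lambda>g. if g \<in> H then 0 else real (F g)) \<in> borel_measurable borel"
      by (intro measurable_If_set Fmeas) simp_all
    then show ?thesis unfolding l'_def[abs_def] .
  qed
  have LF: "length_function l'"
    unfolding length_function_def using l'meas l'nn l'H[OF H0] l'sym l'tri by blast
  obtain W D0 where W: "open W" "0 \<in> W" "\<forall>w\<in>W. l w \<le> D0"
    using lf_bounded_nbhd[OF lc lf] by blast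
  define D where "D = max D0 0"
  have D: "\<forall>w\<in>W. l w \<le> D" "0 \<le> D" using W(3) unfolding D_def by force+
  have key: "\<And>g. l g \<le> real (F g) + D"
  proof -
    fix g
    define V where "V = (+) g ` (uminus ` W)"
    have "open V" unfolding V_def by (intro tg_open_left tg_open_neg W(1))
    moreover have "g \<in> V" unfolding V_def using W(2) by (intro image_eqI[of _ _ "0"]) (auto intro: image_eqI[of _ _ 0])
    ultimately have "V \<inter> closure (A (F g)) \<noteq> {}" using F_in[of g] by blast
    then have "V \<inter> A (F g) \<noteq> {}" using open_Int_closure_eq_empty[OF \<open>open V\<close>] by blast
    then obtain s where s: "s \<in> V" "s \<in> A (F g)" by blast
    then obtain w where w: "w \<in> W" "s = g + - w" unfolding V_def by blast
    have "g = s + w" using w(2) by (simp add: add.assoc)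
    then have "l g \<le> l s + l w" using tri by simp
    also have "\<dots> \<le> real (F g) + D" using A1[OF s(2)] D(1) w(1) by fastforce
    finally show "l g \<le> real (F g) + D" .
  qed
  define c0 where "c0 = 3 * C + D + 1"
  have llo: "\<And>g. l g \<le> l' g + c0"
  proof -
    fix g show "l g \<le> l' g + c0"
    proof (cases "g \<in> H")
      case True then show ?thesis using C D unfolding l'_def c0_def by fastforce
    next
      case False then show ?thesis using key[of g] C D unfolding l'_def c0_def by simp
    qed
  qed
  have lup: "\<And>g. l' g \<le> l g + c0"
  proof -
    fix g show "l' g \<le> l g + c0"
    proof (cases "g \<in> H")
      case True then show ?thesis using C D lnn[of g] unfolding l'_def c0_def by simp
    next
      case False
      have "F g \<le> nat \<lceil>l g + 2 * C\<rceil>" by (rule F_le[OF Fex])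
      then have "real (F g) \<le> real (nat \<lceil>l g + 2 * C\<rceil>)" by simp
      also have "\<dots> \<le> l g + 2 * C + 1" using lnn[of g] C(2) by (intro nat_ceiling_le) simp
      finally show ?thesis using False C D unfolding l'_def c0_def by simp
    qed
  qed
  have EQ: "lf_equivalent l l'"
    unfolding lf_equivalent_def
  proof (intro exI conjI allI)
    show "0 \<le> c0" unfolding c0_def using C D by simp
    show "0 \<le> (1::real)" by simp
    fix g
    show "l' g \<le> 1 * l g + c0" using lup[of g] by simp
    show "l g \<le> 1 * l' g + c0" using llo[of g] by simp
  qed
  have PL: "pair_length_function H l'" unfolding pair_length_function_def using LF l'H by blast
  have inv: "\<And>h g. h \<in> H \<Longrightarrow> l' (h + g) \<le> l' g" using l'tri l'H by (metis add_0)
  have LB: "locally_bounded_lf l \<longrightarrow> locally_bounded_lf l' \<and> locally_bounded_pair H l'"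
  proof
    assume lb: "locally_bounded_lf l"
    have lb': "locally_bounded_lf l'" unfolding locally_bounded_lf_def
    proof (intro allI impI)
      fix K :: "'a set" assume "compact K"
      then obtain B where "\<forall>g\<in>K. l g \<le> B" using lb unfolding locally_bounded_lf_def by blast
      then have "\<forall>g\<in>K. l' g \<le> B + c0" using lup by (meson add_right_mono order_trans)
      then show "\<exists>B. \<forall>g\<in>K. l' g \<le> B" by blast
    qed
    then show "locally_bounded_lf l' \<and> locally_bounded_pair H l'"
      using pair_lb[OF Hsg lc lb' inv] by blast
  qed
  have PR: "proper_lf l \<longrightarrow> proper_lf l' \<and> proper_pair H l'"
  proof
    assume pr: "proper_lf l"
    have pr': "proper_lf l'" unfolding proper_lf_def
    proof
      fix n :: real
      have "l' -` {..n} \<subseteq> l -` {..n + c0}"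
      proof
        fix x assume "x \<in> l' -` {..n}"
        then have "l' x \<le> n" by simp
        then have "l x \<le> n + c0" using llo[of x] by linarith
        then show "x \<in> l -` {..n + c0}" by simp
      qed
      then have sub: "closure (l' -` {..n}) \<subseteq> closure (l -` {..n + c0})" by (rule closure_mono)
      have "compact (closure (l -` {..n + c0}))" using pr unfolding proper_lf_def by blast
      then have "compact (closure (l -` {..n + c0}) \<inter> closure (l' -` {..n}))"
        by (intro compact_Int_closed) simp_all
      moreover have "closure (l -` {..n + c0}) \<inter> closure (l' -` {..n}) = closure (l' -` {..n})"
        using sub by blast
      ultimately show "compact (closure (l' -` {..n}))" by simp
    qed
    then show "proper_lf l' \<and> proper_pair H l'" using pair_proper[OF Hsg cH pr'] by blast
  qed
  show ?thesis
    by (intro exI[of _ l'] conjI LF EQ PL LB PR) (use l'H in blast)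
qed

end
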